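(* Let $\varphi:(0,1]\to(0,\infty)$ be differentiable with $\int_0^1\frac{ds}{\varphi(s)}<\infty$ and \[ \frac{\varphi'(s)}{\varphi(s)}\le\frac{2}{s}\quad\text{for all } s\in(0,1). \] Define, for $A\in[0,1]$ and $N\in[0,1]$, \[ T(A,N)=N\int_0^{N/(A+1)}\frac{ds}{\varphi(s)}. \] Then $T$ is a convex function of $(A,N)$ on $[0,1]\times[0,1]$. *)

theory Defs
  imports "HOL-Analysis.Analysis"
begin

end

theory Submission
  imports Defs
begin

lemma convex_Icc_deriv:
  fixes f f' :: "real \<Rightarrow> real"
  assumes cont: "continuous_on {a..b} f"
    and der: "\<And>x. x \<in> {a<..<b} \<Longrightarrow> (f has_real_derivative f' x) (at x)"
    and mono: "\<And>x y. x \<in> {a<..<b} \<Longrightarrow> y \<in> {a<..<b} \<Longrightarrow> x \<le> y \<Longrightarrow> f' x \<le> f' y"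
  shows "convex_on {a..b} f"
proof (rule convex_on_linorderI)
  show "convex {a..b}" by (rule convex_real_interval)
next
  fix t x y :: real
  assume t: "t > 0" "t < 1"
  assume xy: "x \<in> {a..b}" "y \<in> {a..b}" "x < y"
  define z where "z = (1 - t) * x + t * y"
  from xy t have xz: "z > x"
    by (simp add: z_def algebra_simps)
  have "y - z = (1 - t) * (y - x)"
    by (simp add: z_def algebra_simps)
  also from xy t have "\<dots> > 0"
    by (intro mult_pos_pos) simp_all
  finally have yz: "z < y"
    by simp
  have c1: "continuous_on {x..z} f"
    using cont xy yz by (auto intro: continuous_on_subset)
  have c2: "continuous_on {z..y} f"
    using cont xy xz by (auto intro: continuous_on_subset)
  obtain l \<xi> where \<xi>: "x < \<xi>" "\<xi> < z" "DERIV f \<xi> :> l" "f z - f x = (z - x) * l"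
    using MVT[OF xz c1] xy yz der by (force simp: real_differentiable_def)
  obtain m \<eta> where \<eta>: "z < \<eta>" "\<eta> < y" "DERIV f \<eta> :> m" "f y - f z = (y - z) * m"
    using MVT[OF yz c2] xy xz der by (force simp: real_differentiable_def)
  have \<xi>A: "\<xi> \<in> {a<..<b}" using \<xi> xy yz by auto
  have \<eta>A: "\<eta> \<in> {a<..<b}" using \<eta> xy xz by auto
  have "l = f' \<xi>" using DERIV_unique[OF \<xi>(3) der[OF \<xi>A]] .
  moreover have "m = f' \<eta>" using DERIV_unique[OF \<eta>(3) der[OF \<eta>A]] .
  ultimately have lm: "l \<le> m" using mono[OF \<xi>A \<eta>A] \<xi> \<eta> by auto
  have "(f z - f x) * (y - z) = (z - x) * (y - z) * l" using \<xi>(4) by simp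
  also have "\<dots> \<le> (z - x) * (y - z) * m"
    using lm xz yz by (intro mult_left_mono) auto
  also have "\<dots> = (f y - f z) * (z - x)" using \<eta>(4) by simp
  finally have "(f y - f z) * (z - x) \<ge> (f z - f x) * (y - z)" .
  also have "z - x = t * (y - x)"
    by (simp add: z_def algebra_simps)
  also have "y - z = (1 - t) * (y - x)"
    by (simp add: z_def algebra_simps)
  finally have "(f y - f z) * t \<ge> (f z - f x) * (1 - t)"
    using xy by simp
  then show "(1 - t) * f x + t * f y \<ge> f ((1 - t) *\<^sub>R x + t *\<^sub>R y)"
    by (simp add: z_def algebra_simps)
qed

theorem mainTheorem6:
  fixes \<phi> \<phi>' :: "real \<Rightarrow> real"
  assumes pos: "\<And>s. s \<in> {0<..1} \<Longrightarrow> \<phi> s > 0"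
    and deriv: "\<And>s. s \<in> {0<..1} \<Longrightarrow> (\<phi> has_real_derivative \<phi>' s) (at s within {0<..1})"
    and integrable: "(\<lambda>s. 1 / \<phi> s) integrable_on {0<..1}"
    and logderiv: "\<And>s. s \<in> {0<..<1} \<Longrightarrow> \<phi>' s / \<phi> s \<le> 2 / s"
  shows "convex_on ({0..1} \<times> {0..1})
           (\<lambda>(A, N). N * integral {0..N / (A + 1)} (\<lambda>s. 1 / \<phi> s))"
proof -
  define F where "F x = integral {0..x} (\<lambda>s. 1 / \<phi> s)" for x
  define g where "g x = x * F x" for x
  have int01: "(\<lambda>s. 1 / \<phi> s) integrable_on {0..1}"
  proof -
    have "{0..1::real} = insert 0 {0<..1}" by auto
    thus ?thesis using integrable integrable_on_insert_iff by metis
  qed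
  have contF: "continuous_on {0..1} F"
    unfolding F_def by (rule indefinite_integral_continuous_1[OF int01])
  have contg: "continuous_on {0..1} g"
    unfolding g_def by (intro continuous_intros contF)
  have dphi: "DERIV \<phi> x :> \<phi>' x" if x: "x \<in> {0<..<1}" for x
  proof -
    have "(\<phi> has_real_derivative \<phi>' x) (at x within {0<..<1})"
      using deriv[of x] x by (auto intro: has_field_derivative_subset)
    thus ?thesis using x at_within_open[of x "{0<..<1::real}"] by simp
  qed
  have dF: "DERIV F x :> 1 / \<phi> x" if x: "x \<in> {0<..<1}" for x
  proof -
    have "isCont \<phi> x" using dphi[OF x] by (rule DERIV_isCont)
    moreover have "\<phi> x \<noteq> 0" using pos[of x] x by auto
    ultimately have "isCont (\<lambda>s. 1 / \<phi> s) x" by (intro continuous_intros)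
    hence c: "continuous (at x within ({0..1} - {})) (\<lambda>s. 1 / \<phi> s)"
      by (simp add: continuous_at_imp_continuous_within)
    have "(F has_vector_derivative 1 / \<phi> x) (at x within ({0..1} - {}))"
      unfolding F_def
      by (rule integral_has_vector_derivative_continuous_at[OF int01 _ _ c]) (use x in auto)
    moreover have "at x within {0..1} = at x"
      using x by (intro at_within_interior) auto
    ultimately show ?thesis
      by (simp add: has_real_derivative_iff_has_vector_derivative)
  qed
  define g' where "g' x = F x + x / \<phi> x" for x
  have dg: "DERIV g x :> g' x" if x: "x \<in> {0<..<1}" for x
  proof -
    have "DERIV g x :> x * (1 / \<phi> x) + 1 * F x"
      unfolding g_def by (rule DERIV_mult'[OF DERIV_ident dF[OF x]])
    thus ?thesis by (simp add: g'_def add.commute)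
  qed
  have dg': "DERIV g' x :> 1 / \<phi> x + (1 * \<phi> x - x * \<phi>' x) / (\<phi> x * \<phi> x)"
    if x: "x \<in> {0<..<1}" for x
  proof -
    have "\<phi> x \<noteq> 0" using pos[of x] x by auto
    thus ?thesis unfolding g'_def
      by (rule DERIV_add[OF dF[OF x] DERIV_divide[OF DERIV_ident dphi[OF x]]])
  qed
  have g''nn: "1 / \<phi> x + (1 * \<phi> x - x * \<phi>' x) / (\<phi> x * \<phi> x) \<ge> 0"
    if x: "x \<in> {0<..<1}" for x
  proof -
    have p: "\<phi> x > 0" using pos[of x] x by auto
    have "\<phi>' x / \<phi> x \<le> 2 / x" using logderiv x by auto
    hence "\<phi>' x \<le> 2 / x * \<phi> x" using p by (simp add: pos_divide_le_eq)
    hence "x * \<phi>' x \<le> x * (2 / x * \<phi> x)" using x by (intro mult_left_mono) auto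
    hence h: "x * \<phi>' x \<le> 2 * \<phi> x" using x by simp
    have "1 / \<phi> x + (1 * \<phi> x - x * \<phi>' x) / (\<phi> x * \<phi> x)
          = (2 * \<phi> x - x * \<phi>' x) / (\<phi> x * \<phi> x)"
      using p by (simp add: field_simps power2_eq_square)
    also have "\<dots> \<ge> 0" using h by simp
    finally show ?thesis .
  qed
  have gconv: "convex_on {0..1} g"
  proof (rule convex_Icc_deriv[OF contg dg])
    fix x y :: real assume "x \<in> {0<..<1}" "y \<in> {0<..<1}" "x \<le> y"
    thus "g' x \<le> g' y"
      by (intro DERIV_nonneg_imp_nondecreasing[of x y g'])
         (use dg' g''nn in \<open>force\<close>)+
  qed auto
  have key: "N * integral {0..N / (A + 1)} (\<lambda>s. 1 / \<phi> s) = (A + 1) * g (N / (A + 1))"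
    if "A \<ge> 0" for A N :: real
    using that by (simp add: g_def F_def)
  show ?thesis
    unfolding convex_on_def
  proof (intro conjI ballI allI impI)
    show "convex ({0..1::real} \<times> {0..1::real})"
      by (intro convex_Times convex_real_interval)
  next
    fix p q :: "real \<times> real" and u v :: real
    assume p: "p \<in> {0..1} \<times> {0..1}" and q: "q \<in> {0..1} \<times> {0..1}"
      and u: "0 \<le> u" and v: "0 \<le> v" and uv: "u + v = 1"
    obtain A1 N1 where p': "p = (A1, N1)" by (cases p)
    obtain A2 N2 where q': "q = (A2, N2)" by (cases q)
    have r: "A1 \<in> {0..1}" "N1 \<in> {0..1}" "A2 \<in> {0..1}" "N2 \<in> {0..1}" using p q p' q' by auto
    define a1 where "a1 = A1 + 1"
    define a2 where "a2 = A2 + 1"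
    define a where "a = u * a1 + v * a2"
    have a1p: "a1 \<ge> 1" "a2 \<ge> 1" using r by (auto simp: a1_def a2_def)
    have ap: "a \<ge> 1"
    proof -
      have "u * a1 + v * a2 \<ge> u * 1 + v * 1"
        using a1p u v by (intro add_mono mult_left_mono) auto
      thus ?thesis using uv by (simp add: a_def)
    qed
    define x1 where "x1 = N1 / a1"
    define x2 where "x2 = N2 / a2"
    have x1r: "x1 \<in> {0..1}" using r a1p by (auto simp: x1_def field_simps)
    have x2r: "x2 \<in> {0..1}" using r a1p by (auto simp: x2_def field_simps)
    define t where "t = v * a2 / a"
    have t0: "t \<ge> 0" using v a1p ap by (simp add: t_def)
    have t1: "1 - t = u * a1 / a" using ap uv by (simp add: t_def a_def field_simps)
    have tle: "t \<le> 1" using t1 u a1p ap by (smt (verit) divide_nonneg_nonneg mult_nonneg_nonneg)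
    have c1: "(1 - t) * x1 = u * N1 / a" using a1p by (simp add: t1 x1_def)
    have c2: "t * x2 = v * N2 / a" using a1p by (simp add: t_def x2_def)
    have comb: "(u * N1 + v * N2) / a = (1 - t) * x1 + t * x2"
      by (simp add: c1 c2 add_divide_distrib)
    have gc: "g ((1 - t) * x1 + t * x2) \<le> (1 - t) * g x1 + t * g x2"
      using convex_onD[OF gconv t0 tle x1r x2r] by simp
    have lhs: "(case u *\<^sub>R p + v *\<^sub>R q of (A, N) \<Rightarrow> N * integral {0..N / (A + 1)} (\<lambda>s. 1 / \<phi> s))
        = a * g ((u * N1 + v * N2) / a)"
    proof -
      have "u * A1 + v * A2 \<ge> 0" using u v r by auto
      moreover have "u * A1 + v * A2 + 1 = a" using uv by (simp add: a_def a1_def a2_def algebra_simps)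
      ultimately show ?thesis using key[of "u * A1 + v * A2" "u * N1 + v * N2"]
        by (simp add: p' q')
    qed
    have rhs: "u * (case p of (A, N) \<Rightarrow> N * integral {0..N / (A + 1)} (\<lambda>s. 1 / \<phi> s)) +
        v * (case q of (A, N) \<Rightarrow> N * integral {0..N / (A + 1)} (\<lambda>s. 1 / \<phi> s))
        = u * (a1 * g x1) + v * (a2 * g x2)"
      using key[of A1 N1] key[of A2 N2] r by (simp add: p' q' a1_def a2_def x1_def x2_def)
    have "a * g ((u * N1 + v * N2) / a) \<le> a * ((1 - t) * g x1 + t * g x2)"
      using gc comb ap by (intro mult_left_mono) auto
    also have "\<dots> = (a * (1 - t)) * g x1 + (a * t) * g x2"
      by (simp add: algebra_simps)
    also have "a * (1 - t) = u * a1" using ap by (simp add: t1)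
    also have "a * t = v * a2" using ap by (simp add: t_def)
    also have "(u * a1) * g x1 + (v * a2) * g x2 = u * (a1 * g x1) + v * (a2 * g x2)"
      by (simp add: algebra_simps)
    finally show "(case u *\<^sub>R p + v *\<^sub>R q of (A, N) \<Rightarrow> N * integral {0..N / (A + 1)} (\<lambda>s. 1 / \<phi> s))
        \<le> u * (case p of (A, N) \<Rightarrow> N * integral {0..N / (A + 1)} (\<lambda>s. 1 / \<phi> s)) +
        v * (case q of (A, N) \<Rightarrow> N * integral {0..N / (A + 1)} (\<lambda>s. 1 / \<phi> s))"
      using lhs rhs by simp
  qed
qed

end
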